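(* Let $r\in\mathbb{N}$, $d\in(0,\pi]$ and $\lambda\in(0,d/3]$. Then $$\|\mathcal{E}_{r,d,\lambda}-\mathcal{E}_{r,d}\|\le c_5\lambda,$$ where $c_5>0$ depends only on $r$.
   Context: Let $\gamma_d:=1-d/\pi$. $\mathcal{E}_{r,d}$ denotes the $2\pi$-periodic function with $\mathcal{E}_{r,d}\in C^{r-1}(\mathbb{R})$, $\int_{-\pi}^{\pi}\mathcal{E}_{r,d}(x)\,dx=0$, and $\mathcal{E}_{r,d}^{(r)}(x)=\operatorname{sign}x-\gamma_d$ for $x\in(-d,2\pi-d)\setminus\{0\}$. Fix $S\in C^\infty(\mathbb{R})$, a monotone odd function with $S(x)=\operatorname{sign}x$ for $|x|\ge 1$. Define $\tilde S_{\lambda,d}(x):=S\big((x-2\lambda)/\lambda\big)$ for $x\in[0,2\pi-d]$ and $\tilde S_{\lambda,d}(x):=-S\big((x-2\lambda+d)/\lambda\big)$ for $x\in[-d,0]$, and $S_{\lambda,d}(x):=\tilde S_{\lambda,d}(x)-\gamma_d$ for $x\in[-d,2\pi-d]$. Then $\mathcal{E}_{r,d,\lambda}$ denotes the $2\pi$-periodic function in $C^\infty(\mathbb{R})$ with $\int_{-\pi}^{\pi}\mathcal{E}_{r,d,\lambda}(x)\,dx=0$ and $\mathcal{E}_{r,d,\lambda}^{(r)}(x)=S_{\lambda,d}(x)$ for $x\in[-d,2\pi-d]$. For a $2\pi$-periodic continuous $g$, $\|g\|=\max_{x\in\mathbb{R}}|g(x)|$. *)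

theory Defs
  imports "HOL-Analysis.Analysis"
begin

definition Ck :: "nat \<Rightarrow> (real \<Rightarrow> real) \<Rightarrow> bool" where
  "Ck k f \<longleftrightarrow> (\<forall>j<k. \<forall>x. ((deriv ^^ j) f has_real_derivative (deriv ^^ Suc j) f x) (at x))
                 \<and> continuous_on UNIV ((deriv ^^ k) f)"

definition Cinf :: "(real \<Rightarrow> real) \<Rightarrow> bool" where
  "Cinf f \<longleftrightarrow> (\<forall>k. Ck k f)"

definition periodic2pi :: "(real \<Rightarrow> real) \<Rightarrow> bool" where
  "periodic2pi f \<longleftrightarrow> (\<forall>x. f (x + 2 * pi) = f x)"

definition gam :: "real \<Rightarrow> real" where
  "gam d = 1 - d / pi"

text \<open>The perfect spline E_{r,d} (r \<ge> 1): 2pi-periodic, C^{r-1}, mean zero, and its r-th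
  derivative (= derivative of the (r-1)-th one) equals sign x - gam d on (-d, 2pi-d) minus 0.\<close>
definition Erd :: "nat \<Rightarrow> real \<Rightarrow> real \<Rightarrow> real" where
  "Erd r d = (THE f. periodic2pi f \<and> Ck (r - 1) f \<and> integral {-pi..pi} f = 0 \<and>
     (\<forall>x\<in>{-d<..<2*pi-d} - {0}. ((deriv ^^ (r - 1)) f has_real_derivative (sgn x - gam d)) (at x)))"

definition Stilde :: "(real \<Rightarrow> real) \<Rightarrow> real \<Rightarrow> real \<Rightarrow> real \<Rightarrow> real" where
  "Stilde S lam d x = (if 0 \<le> x then S ((x - 2 * lam) / lam) else - S ((x - 2 * lam + d) / lam))"

definition Sld :: "(real \<Rightarrow> real) \<Rightarrow> real \<Rightarrow> real \<Rightarrow> real \<Rightarrow> real" where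
  "Sld S lam d x = Stilde S lam d x - gam d"

definition Erdl :: "(real \<Rightarrow> real) \<Rightarrow> nat \<Rightarrow> real \<Rightarrow> real \<Rightarrow> real \<Rightarrow> real" where
  "Erdl S r d lam = (THE f. periodic2pi f \<and> Cinf f \<and> integral {-pi..pi} f = 0 \<and>
     (\<forall>x\<in>{-d..2*pi-d}. (deriv ^^ r) f x = Sld S lam d x))"

definition unorm :: "(real \<Rightarrow> real) \<Rightarrow> real" where
  "unorm g = (SUP x. \<bar>g x\<bar>)"

end

theory Submission
  imports Defs
begin


lemma deriv_cong_open:
  assumes "open U" "x \<in> U" "\<And>y. y \<in> U \<Longrightarrow> f y = g y"
  shows "deriv f x = deriv g x"
proof -
  have "\<And>D. (f has_field_derivative D) (at x) \<longleftrightarrow> (g has_field_derivative D) (at x)"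
    using has_field_derivative_transform_within_open assms by metis
  then show ?thesis by (simp add: deriv_def)
qed

lemma Cinf_iff:
  "Cinf f \<longleftrightarrow> (\<forall>j x. ((deriv^^j) f has_real_derivative (deriv^^Suc j) f x) (at x))"
proof
  assume "Cinf f"
  then show "\<forall>j x. ((deriv^^j) f has_real_derivative (deriv^^Suc j) f x) (at x)"
    unfolding Cinf_def Ck_def by blast
next
  assume H: "\<forall>j x. ((deriv^^j) f has_real_derivative (deriv^^Suc j) f x) (at x)"
  have "\<forall>x. isCont ((deriv ^^ k) f) x" for k using H DERIV_isCont by blast
  then show "Cinf f" unfolding Cinf_def Ck_def using H
    by (auto intro!: continuous_at_imp_continuous_on)
qed

lemma Cinf_seq:
  assumes "g 0 = f" "\<And>j x. (g j has_real_derivative g (Suc j) x) (at x)"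
  shows "Cinf f" "(deriv^^j) f = g j"
proof -
  have E: "(deriv^^j) f = g j" for j
  proof (induction j)
    case 0 then show ?case using assms by simp
  next
    case (Suc j)
    have "(deriv^^Suc j) f = deriv (g j)" using Suc by simp
    also have "\<dots> = g (Suc j)" using assms(2) DERIV_imp_deriv by blast
    finally show ?case .
  qed
  then show "(deriv^^j) f = g j" .
  show "Cinf f" unfolding Cinf_iff E using assms(2) by blast
qed

lemma Cinf_local:
  assumes "\<And>x0. \<exists>U h. open U \<and> x0 \<in> U \<and> Cinf h \<and> (\<forall>x\<in>U. f x = h x)"
  shows "Cinf f"
  unfolding Cinf_iff
proof (intro allI)
  fix j x0
  obtain U h where U: "open U" "x0 \<in> U" "Cinf h" "\<forall>x\<in>U. f x = h x" using assms by blast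
  have E: "\<forall>x\<in>U. (deriv^^i) f x = (deriv^^i) h x" for i
  proof (induction i)
    case 0 then show ?case using U by simp
  next
    case (Suc i)
    show ?case
    proof
      fix x assume "x \<in> U"
      then show "(deriv^^Suc i) f x = (deriv^^Suc i) h x"
        using deriv_cong_open[OF U(1) _ Suc[rule_format]] by simp
    qed
  qed
  have "((deriv^^j) h has_real_derivative (deriv^^Suc j) h x0) (at x0)"
    using U(3) unfolding Cinf_iff by blast
  then have "((deriv^^j) f has_real_derivative (deriv^^Suc j) h x0) (at x0)"
    by (rule has_field_derivative_transform_within_open[OF _ U(1) U(2)]) (use E in auto)
  then show "((deriv^^j) f has_real_derivative (deriv^^Suc j) f x0) (at x0)"
    using E U(2) by metis
qed

lemma Cinf_affine:
  assumes "Cinf S"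
  shows "Cinf (\<lambda>x. S (a*x+b))"
proof (rule Cinf_seq[where g="\<lambda>j x. a^j * (deriv^^j) S (a*x+b)"])
  show "(\<lambda>x. a ^ 0 * (deriv ^^ 0) S (a * x + b)) = (\<lambda>x. S (a * x + b))" by simp
  fix j x
  have D: "((deriv^^j) S has_real_derivative (deriv^^Suc j) S (a*x+b)) (at (a*x+b))"
    using assms unfolding Cinf_iff by blast
  have "((\<lambda>x. a*x+b) has_real_derivative a) (at x)"
    by (auto intro!: derivative_eq_intros)
  from DERIV_chain2[OF D this] have
    "((\<lambda>x. (deriv^^j) S (a*x+b)) has_real_derivative (deriv^^Suc j) S (a*x+b) * a) (at x)" .
  from DERIV_cmult[OF this, of "a^j"]
  show "((\<lambda>x. a ^ j * (deriv ^^ j) S (a * x + b)) has_real_derivative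
          a ^ Suc j * (deriv ^^ Suc j) S (a * x + b)) (at x)"
    by (simp add: algebra_simps)
qed

lemma Cinf_comb:
  assumes "Cinf f" "Cinf g"
  shows "Cinf (\<lambda>x. f x - g x + c)"
proof (rule Cinf_seq[where g="\<lambda>j x. (deriv^^j) f x - (deriv^^j) g x + (if j = 0 then c else 0)"])
  show "(\<lambda>x. (deriv ^^ 0) f x - (deriv ^^ 0) g x + (if 0 = (0::nat) then c else 0)) = (\<lambda>x. f x - g x + c)"
    by simp
  fix j x
  have "((deriv^^j) f has_real_derivative (deriv^^Suc j) f x) (at x)"
       "((deriv^^j) g has_real_derivative (deriv^^Suc j) g x) (at x)"
    using assms unfolding Cinf_iff by blast+
  then have "((\<lambda>x. (deriv^^j) f x - (deriv^^j) g x + (if j = 0 then c else 0)) has_real_derivative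
     (deriv^^Suc j) f x - (deriv^^Suc j) g x + 0) (at x)"
    by (auto intro!: derivative_eq_intros)
  then show "((\<lambda>x. (deriv^^j) f x - (deriv^^j) g x + (if j = 0 then c else 0)) has_real_derivative
     (deriv^^Suc j) f x - (deriv^^Suc j) g x + (if Suc j = 0 then c else 0)) (at x)" by simp
qed

lemma periodic_deriv:
  assumes "periodic2pi f" shows "periodic2pi (deriv f)"
  unfolding periodic2pi_def
proof
  fix x
  have ff: "(\<lambda>x. f (x + 2*pi)) = f" using assms unfolding periodic2pi_def by auto
  have "\<And>D. (f has_field_derivative D) (at (x + 2*pi)) \<longleftrightarrow> (f has_field_derivative D) (at x)"
    by (subst DERIV_shift) (simp add: ff)
  then show "deriv f (x + 2 * pi) = deriv f x" by (simp add: deriv_def)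
qed

lemma periodic_derivs:
  assumes "periodic2pi f" shows "periodic2pi ((deriv^^j) f)"
  by (induction j) (use assms periodic_deriv in auto)

lemma periodic_nat:
  assumes "periodic2pi f" shows "f (x + 2*pi*real n) = f x"
proof (induction n)
  case 0 then show ?case by simp
next
  case (Suc n)
  have "f (x + 2*pi*real (Suc n)) = f ((x + 2*pi*real n) + 2*pi)" by (simp add: algebra_simps)
  also have "\<dots> = f (x + 2*pi*real n)" using assms unfolding periodic2pi_def by blast
  finally show ?case using Suc by simp
qed

lemma periodic_int:
  assumes "periodic2pi f" shows "f (x + 2*pi * of_int k) = f x"
proof (cases "k \<ge> 0")
  case True
  define n where "n = nat k"
  have "k = int n" using True by (simp add: n_def)
  then show ?thesis using periodic_nat[OF assms] by simp
next
  case False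
  define n where "n = nat (- k)"
  have n: "k = - int n" using False by (simp add: n_def)
  have "f x = f ((x + 2*pi * of_int k) + 2*pi*real n)" by (simp add: n)
  also have "\<dots> = f (x + 2*pi * of_int k)" using periodic_nat[OF assms] by blast
  finally show ?thesis by simp
qed

definition red :: "real \<Rightarrow> real \<Rightarrow> real" where
  "red a x = x - 2*pi * of_int \<lfloor>(x - a)/(2*pi)\<rfloor>"

lemma red_bounds: "a \<le> red a x" "red a x < a + 2*pi"
proof -
  let ?t = "(x - a)/(2*pi)"
  have t: "2*pi*?t = x - a" by simp
  have "of_int \<lfloor>?t\<rfloor> \<le> ?t" "?t < of_int \<lfloor>?t\<rfloor> + 1" by linarith+
  then have "2*pi * of_int \<lfloor>?t\<rfloor> \<le> 2*pi*?t" "2*pi*?t < 2*pi*(of_int \<lfloor>?t\<rfloor> + 1)"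
    using pi_gt_zero by (simp_all only: mult_le_cancel_left_pos mult_less_cancel_left_pos)
  then show "a \<le> red a x" "red a x < a + 2*pi" unfolding red_def t by (simp_all add: algebra_simps)
qed

lemma red_id: "a \<le> x \<Longrightarrow> x < a + 2*pi \<Longrightarrow> red a x = x"
proof -
  assume "a \<le> x" "x < a + 2*pi"
  then have "\<lfloor>(x - a)/(2*pi)\<rfloor> = 0" using pi_gt_zero by (simp add: floor_eq_iff field_simps)
  then show ?thesis by (simp add: red_def)
qed

lemma red_periodic: "periodic2pi (red a)"
  unfolding periodic2pi_def
proof
  fix x
  have "(x + 2*pi - a)/(2*pi) = (x - a)/(2*pi) + 1" using pi_gt_zero by (simp add: field_simps)
  then show "red a (x + 2*pi) = red a x" unfolding red_def by (simp add: algebra_simps)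
qed

lemma periodic_red:
  assumes "periodic2pi f" shows "f (red a x) = f x"
  unfolding red_def using periodic_int[OF assms, of x "- \<lfloor>(x - a)/(2*pi)\<rfloor>"] by simp



definition sint :: "(real \<Rightarrow> real) \<Rightarrow> real \<Rightarrow> real" where
  "sint g x = integral {0..x} g - integral {x..0} g"

definition prim :: "(real \<Rightarrow> real) \<Rightarrow> real \<Rightarrow> real" where
  "prim g x = sint g x - integral {-pi..pi} (sint g) / (2*pi)"

definition good :: "(real \<Rightarrow> real) \<Rightarrow> bool" where
  "good g \<longleftrightarrow> continuous_on UNIV g \<and> periodic2pi g \<and> integral {-pi..pi} g = 0"

lemma sint_alt:
  assumes g: "continuous_on UNIV g" and "a \<le> y" "a \<le> 0"
  shows "sint g y = integral {a..y} g - integral {a..0} g"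
proof (cases "y \<ge> 0")
  case True
  have i: "g integrable_on {a..y}" using g by (intro integrable_continuous_interval continuous_on_subset[OF g]) auto
  have "integral {a..0} g + integral {0..y} g = integral {a..y} g"
    by (rule Henstock_Kurzweil_Integration.integral_combine) (use True assms i in auto)
  moreover have "integral {y..0} g = 0"
  proof (cases "y = 0")
    case True then show ?thesis by simp
  next
    case False then have "{y..0} = {}" using \<open>y \<ge> 0\<close> by auto
    then show ?thesis by simp
  qed
  ultimately show ?thesis unfolding sint_def by simp
next
  case False
  have i: "g integrable_on {a..0}" using g by (intro integrable_continuous_interval continuous_on_subset[OF g]) auto
  have "integral {a..y} g + integral {y..0} g = integral {a..0} g"
    by (rule Henstock_Kurzweil_Integration.integral_combine) (use False assms i in auto)
  moreover have "{0..y} = {}" using False by auto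
  ultimately show ?thesis unfolding sint_def by simp
qed

lemma sint_deriv:
  assumes g: "continuous_on UNIV g"
  shows "(sint g has_real_derivative g x) (at x)"
proof -
  define a where "a = min x 0 - 1"
  define b where "b = max x 0 + 1"
  have "((\<lambda>y. integral {a..y} g) has_real_derivative g x) (at x within {a..b})"
    by (rule integral_has_real_derivative) (use continuous_on_subset[OF g] a_def b_def in auto)
  moreover have "at x within {a..b} = at x" by (rule at_within_Icc_at) (auto simp: a_def b_def)
  ultimately have "((\<lambda>y. integral {a..y} g - integral {a..0} g) has_real_derivative g x) (at x)"
    using DERIV_diff[where g="\<lambda>y. integral {a..0} g" and E=0] by auto
  then show ?thesis
    by (rule has_field_derivative_transform_within_open[where S="{a<..<b}"])
       (use sint_alt[OF g, of a] a_def b_def in auto)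
qed

lemma cont_of_deriv:
  assumes "\<And>x. (f has_real_derivative f' x) (at x)" shows "continuous_on UNIV f"
  using assms DERIV_isCont by (blast intro: continuous_at_imp_continuous_on)

lemma mean0_of_deriv:
  assumes "periodic2pi u" "\<And>x. (u has_real_derivative v x) (at x)"
  shows "integral {-pi..pi} v = 0"
proof -
  have "(v has_integral (u pi - u (-pi))) {-pi..pi}"
    by (rule fundamental_theorem_of_calculus)
       (use assms(2) in \<open>auto simp: has_real_derivative_iff_has_vector_derivative[symmetric] intro: has_field_derivative_at_within\<close>)
  moreover have "u (-pi + 2*pi) = u (-pi)" using assms(1) unfolding periodic2pi_def by blast
  then have "u pi = u (-pi)" by simp
  ultimately show ?thesis by (simp add: integral_unique)
qed

lemma sint_periodic:
  assumes "good g" shows "periodic2pi (sint g)"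
proof -
  have g: "continuous_on UNIV g" "periodic2pi g" "integral {-pi..pi} g = 0" using assms good_def by auto
  have D: "((\<lambda>t. sint g (t + 2*pi) - sint g t) has_real_derivative 0) (at x)" for x
  proof -
    have "((\<lambda>t. sint g (t + 2*pi)) has_real_derivative g (x + 2*pi)) (at x)"
      using sint_deriv[OF g(1), of "x + 2*pi"] DERIV_shift by blast
    then have "((\<lambda>t. sint g (t + 2*pi) - sint g t) has_real_derivative g (x + 2*pi) - g x) (at x)"
      using DERIV_diff sint_deriv[OF g(1)] by blast
    moreover have "g (x + 2*pi) = g x" using g(2) periodic2pi_def by auto
    ultimately show ?thesis by simp
  qed
  have "sint g (t + 2*pi) - sint g t = sint g (-pi + 2*pi) - sint g (-pi)" for t
    using DERIV_isconst_all[of "\<lambda>t. sint g (t + 2*pi) - sint g t"] D by blast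
  moreover have "sint g (-pi + 2*pi) - sint g (-pi) = 0"
  proof -
    have i: "g integrable_on {-pi..pi}" using g by (intro integrable_continuous_interval continuous_on_subset[OF g(1)]) auto
    have "integral {-pi..0} g + integral {0..pi} g = integral {-pi..pi} g"
      by (rule Henstock_Kurzweil_Integration.integral_combine) (use i in auto)
    then show ?thesis using g(3) by (simp add: sint_def)
  qed
  ultimately show ?thesis unfolding periodic2pi_def by simp
qed

lemma prim_deriv:
  assumes "continuous_on UNIV g" shows "(prim g has_real_derivative g x) (at x)"
  unfolding prim_def[abs_def] using sint_deriv[OF assms]
  by (auto intro!: derivative_eq_intros)

lemma integral_const_sub:
  assumes "continuous_on UNIV f"
  shows "integral {-pi..pi} (\<lambda>x. f x - c) = integral {-pi..pi} f - 2*pi*c"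
proof -
  have "f integrable_on {-pi..pi}" by (intro integrable_continuous_interval continuous_on_subset[OF assms]) auto
  then have "integral {-pi..pi} (\<lambda>x. f x - c) = integral {-pi..pi} f - integral {-pi..pi} (\<lambda>x. c)"
    by (intro integral_diff) auto
  also have "integral {-pi..pi} (\<lambda>x. c) = 2*pi*c" by simp
  finally show ?thesis .
qed

lemma prim_good:
  assumes "good g" shows "good (prim g)"
proof -
  have g: "continuous_on UNIV g" using assms good_def by auto
  have cs: "continuous_on UNIV (sint g)" using cont_of_deriv sint_deriv[OF g] by blast
  have "continuous_on UNIV (prim g)" using cont_of_deriv prim_deriv[OF g] by blast
  moreover have "periodic2pi (prim g)" using sint_periodic[OF assms] unfolding periodic2pi_def prim_def by simp
  moreover have "integral {-pi..pi} (prim g) = 0"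
    unfolding prim_def[abs_def] by (simp add: integral_const_sub[OF cs])
  ultimately show ?thesis by (simp add: good_def)
qed

lemma iter_good: "good g \<Longrightarrow> good ((prim^^n) g)"
  by (induction n) (auto intro: prim_good)

lemma iter_deriv:
  assumes "good g" shows "((prim^^Suc n) g has_real_derivative (prim^^n) g x) (at x)"
  using prim_deriv iter_good[OF assms, of n] good_def by auto

lemma derivs_iter:
  assumes "good g" "j \<le> n" shows "(deriv^^j) ((prim^^n) g) = (prim^^(n-j)) g"
  using assms(2)
proof (induction j)
  case 0 then show ?case by simp
next
  case (Suc j)
  then have e: "n - j = Suc (n - Suc j)" by simp
  have "(deriv^^Suc j) ((prim^^n) g) = deriv ((prim^^(n-j)) g)" using Suc by simp
  also have "\<dots> = (prim^^(n - Suc j)) g"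
    unfolding e using iter_deriv[OF assms(1)] DERIV_imp_deriv by blast
  finally show ?case .
qed

lemma Ck_iter:
  assumes "good g" "k \<le> n" shows "Ck k ((prim^^n) g)"
  unfolding Ck_def
proof (intro conjI allI impI)
  fix j x assume "j < k"
  then have e: "n - j = Suc (n - Suc j)" using assms by simp
  show "((deriv ^^ j) ((prim ^^ n) g) has_real_derivative (deriv ^^ Suc j) ((prim ^^ n) g) x) (at x)"
    using derivs_iter[OF assms(1), of j n] derivs_iter[OF assms(1), of "Suc j" n] \<open>j < k\<close> assms(2)
      iter_deriv[OF assms(1), of "n - Suc j"] e by simp
next
  show "continuous_on UNIV ((deriv ^^ k) ((prim ^^ n) g))"
    using derivs_iter[OF assms] iter_good[OF assms(1)] good_def by simp
qed

lemma Cinf_iter: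
  assumes "good g" "Cinf g" shows "Cinf ((prim^^n) g)"
proof (rule Cinf_seq[where g="\<lambda>j. if j \<le> n then (prim^^(n-j)) g else (deriv^^(j-n)) g"])
  show "(if 0 \<le> n then (prim ^^ (n - 0)) g else (deriv ^^ (0 - n)) g) = (prim ^^ n) g" by simp
  fix j x
  consider "j < n" | "j = n" | "j > n" by linarith
  then show "((if j \<le> n then (prim ^^ (n - j)) g else (deriv ^^ (j - n)) g) has_real_derivative
          (if Suc j \<le> n then (prim ^^ (n - Suc j)) g else (deriv ^^ (Suc j - n)) g) x) (at x)"
  proof cases
    case 1
    then have e: "n - j = Suc (n - Suc j)" by simp
    show ?thesis using 1 iter_deriv[OF assms(1), of "n - Suc j"] unfolding e by simp
  next
    case 2
    have "((deriv^^0) g has_real_derivative (deriv^^Suc 0) g x) (at x)" using assms(2) Cinf_iff by blast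
    then show ?thesis using 2 by simp
  next
    case 3
    then have e: "Suc j - n = Suc (j - n)" by simp
    show ?thesis using 3 assms(2) unfolding Cinf_iff e by simp
  qed
qed

lemma eq_of_same_deriv:
  assumes "\<And>x. (u has_real_derivative w x) (at x)" "\<And>x. (v has_real_derivative w x) (at x)"
    "integral {-pi..pi} u = 0" "integral {-pi..pi} v = 0"
  shows "u = v"
proof -
  have "((\<lambda>x. u x - v x) has_real_derivative 0) (at x)" for x
    using DERIV_diff[OF assms(1) assms(2)] by simp
  then have c: "u x - v x = u 0 - v 0" for x using DERIV_isconst_all by blast
  have cu: "continuous_on UNIV u" "continuous_on UNIV v" using cont_of_deriv assms by blast+
  have "integral {-pi..pi} (\<lambda>x. u x - (u 0 - v 0)) = integral {-pi..pi} v"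
    using c by (metis add_diff_cancel_left' diff_diff_eq2 diff_add_cancel)
  then have "- 2*pi*(u 0 - v 0) = 0" using integral_const_sub[OF cu(1)] assms by simp
  then have "u 0 - v 0 = 0" by simp
  then show ?thesis using c by auto
qed

lemma uniq_down:
  assumes df: "\<forall>j<n. \<forall>x. ((deriv^^j) f has_real_derivative (deriv^^Suc j) f x) (at x)"
    and dG: "\<forall>j<n. \<forall>x. ((deriv^^j) G has_real_derivative (deriv^^Suc j) G x) (at x)"
    and pf: "periodic2pi f" and pG: "periodic2pi G"
    and if0: "integral {-pi..pi} f = 0" and iG0: "integral {-pi..pi} G = 0"
    and top: "(deriv^^n) f = (deriv^^n) G"
  shows "f = G"
proof -
  have mean: "integral {-pi..pi} ((deriv^^j) h) = 0"
    if "j \<le> n" "periodic2pi h" "integral {-pi..pi} h = 0"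
       "\<forall>j<n. \<forall>x. ((deriv^^j) h has_real_derivative (deriv^^Suc j) h x) (at x)" for h j
  proof (cases j)
    case 0 then show ?thesis using that by simp
  next
    case (Suc i)
    have "i < n" using Suc that(1) by simp
    have "\<forall>x. ((deriv^^i) h has_real_derivative (deriv^^Suc i) h x) (at x)"
      using that(4) \<open>i < n\<close> by blast
    then show ?thesis unfolding Suc
      using mean0_of_deriv[OF periodic_derivs[OF that(2)], of i] by blast
  qed
  have "\<forall>k\<le>n. (deriv^^(n-k)) f = (deriv^^(n-k)) G"
  proof (intro allI)
    fix k show "k \<le> n \<longrightarrow> (deriv^^(n-k)) f = (deriv^^(n-k)) G"
    proof (induction k)
      case 0 then show ?case using top by simp
    next
      case (Suc k)
      show ?case
      proof
        assume k: "Suc k \<le> n"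
        define j where "j = n - Suc k"
        have j: "j < n" "Suc j = n - k" using k by (auto simp: j_def)
        have IH: "(deriv^^Suc j) f = (deriv^^Suc j) G" using Suc k j by simp
        have d1: "\<And>x. ((deriv^^j) f has_real_derivative (deriv^^Suc j) f x) (at x)"
          using df j(1) by blast
        have d2: "\<And>x. ((deriv^^j) G has_real_derivative (deriv^^Suc j) G x) (at x)"
          using dG j(1) by blast
        have d2': "\<And>x. ((deriv^^j) G has_real_derivative (deriv^^Suc j) f x) (at x)"
          unfolding IH by (rule d2)
        have m1: "integral {-pi..pi} ((deriv^^j) f) = 0" using mean[of j f] j pf if0 df by simp
        have m2: "integral {-pi..pi} ((deriv^^j) G) = 0" using mean[of j G] j pG iG0 dG by simp
        show "(deriv^^(n - Suc k)) f = (deriv^^(n - Suc k)) G" unfolding j_def[symmetric]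
          by (rule eq_of_same_deriv[OF d1 d2' m1 m2])
      qed
    qed
  qed
  then have "(deriv^^(n-n)) f = (deriv^^(n-n)) G" by blast
  then show ?thesis by simp
qed



definition Sok :: "(real \<Rightarrow> real) \<Rightarrow> bool" where
  "Sok S \<longleftrightarrow> Cinf S \<and> mono S \<and> (\<forall>x. S (- x) = - S x) \<and> (\<forall>x. \<bar>x\<bar> \<ge> 1 \<longrightarrow> S x = sgn x)"

definition par :: "real \<Rightarrow> real \<Rightarrow> bool" where
  "par d lam \<longleftrightarrow> 0 < d \<and> d \<le> pi \<and> 0 < lam \<and> lam \<le> d / 3"

lemma S_one: "Sok S \<Longrightarrow> y \<ge> 1 \<Longrightarrow> S y = 1"
  unfolding Sok_def by auto
lemma S_mone: "Sok S \<Longrightarrow> y \<le> -1 \<Longrightarrow> S y = -1"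
  unfolding Sok_def by auto
lemma S_bound: assumes "Sok S" shows "\<bar>S y\<bar> \<le> 1"
proof -
  have m: "mono S" using assms Sok_def by auto
  have "S y \<le> 1"
  proof (cases "y \<le> 1")
    case True then have "S y \<le> S 1" using m monoD by blast
    then show ?thesis using S_one[OF assms, of 1] by simp
  qed (use S_one[OF assms] in auto)
  moreover have "S y \<ge> -1"
  proof (cases "y \<ge> -1")
    case True then have "S (-1) \<le> S y" using m monoD by blast
    then show ?thesis using S_mone[OF assms, of "-1"] by simp
  qed (use S_mone[OF assms] in auto)
  ultimately show ?thesis by auto
qed

definition Ffun :: "(real \<Rightarrow> real) \<Rightarrow> real \<Rightarrow> real \<Rightarrow> real \<Rightarrow> real" where
  "Ffun S lam d x = S ((1/lam) * x + (-2)) - S ((1/lam) * x + (d - 2*lam)/lam) + (1 - gam d)"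

definition Pfun :: "(real \<Rightarrow> real) \<Rightarrow> real \<Rightarrow> real \<Rightarrow> real \<Rightarrow> real" where
  "Pfun S lam d x = Sld S lam d (red (-d) x)"

lemma arg1: "0 < (lam::real) \<Longrightarrow> (1/lam) * x + (-2) = (x - 2*lam)/lam"
  by (simp add: field_simps)
lemma arg2: "0 < (lam::real) \<Longrightarrow> (1/lam) * x + (d - 2*lam)/lam = (x - 2*lam + d)/lam"
  by (simp add: field_simps)

lemma F_eq_Sld:
  assumes S: "Sok S" and p: "par d lam" and x: "-d \<le> x" "x \<le> 2*pi - d"
  shows "Ffun S lam d x = Sld S lam d x"
proof -
  have l: "0 < lam" "3*lam \<le> d" "d \<le> pi" using p par_def by auto
  show ?thesis
  proof (cases "0 \<le> x")
    case True
    have "(x - 2*lam + d)/lam \<ge> 1" using True l by (simp add: field_simps)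
    then show ?thesis using True S_one[OF S] l
      unfolding Ffun_def Sld_def Stilde_def arg1[OF l(1)] arg2[OF l(1)] by simp
  next
    case False
    have "(x - 2*lam)/lam \<le> -1" using False l by (simp add: field_simps)
    then show ?thesis using False S_mone[OF S] l
      unfolding Ffun_def Sld_def Stilde_def arg1[OF l(1)] arg2[OF l(1)] by simp
  qed
qed

lemma F_right:
  assumes S: "Sok S" and p: "par d lam" and x: "2*pi - d \<le> x" "x < 2*pi - d + lam"
  shows "Ffun S lam d x = 1 - gam d"
proof -
  have l: "0 < lam" "3*lam \<le> d" "d \<le> pi" using p par_def by auto
  have "(x - 2*lam)/lam \<ge> 1" "(x - 2*lam + d)/lam \<ge> 1" using x l pi_gt_zero by (simp_all add: field_simps)
  then show ?thesis using S_one[OF S] l unfolding Ffun_def arg1[OF l(1)] arg2[OF l(1)] by simp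
qed

lemma Sld_left:
  assumes S: "Sok S" and p: "par d lam" and x: "-d \<le> x" "x < -d + lam"
  shows "Sld S lam d x = 1 - gam d"
proof -
  have l: "0 < lam" "3*lam \<le> d" "d \<le> pi" using p par_def by auto
  have "(x - 2*lam + d)/lam \<le> -1" "\<not> 0 \<le> x" using x l by (simp_all add: field_simps)
  then show ?thesis using S_mone[OF S] by (simp add: Sld_def Stilde_def)
qed

lemma Sld_end:
  assumes S: "Sok S" and p: "par d lam"
  shows "Sld S lam d (2*pi - d) = 1 - gam d"
proof -
  have l: "0 < lam" "3*lam \<le> d" "d \<le> pi" using p par_def by auto
  have "(2*pi - d - 2*lam)/lam \<ge> 1" "0 \<le> 2*pi - d" using l pi_gt_zero by (simp_all add: field_simps)
  then show ?thesis using S_one[OF S] by (simp add: Sld_def Stilde_def)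
qed

lemma red_shift: "red a (x - 2*pi) = red a x"
  using red_periodic[of a] unfolding periodic2pi_def by (metis diff_add_cancel)

lemma P_periodic: "periodic2pi (Pfun S lam d)"
  using red_periodic unfolding periodic2pi_def Pfun_def by simp

lemma P_eq_Sld:
  assumes S: "Sok S" and p: "par d lam" and x: "-d \<le> x" "x \<le> 2*pi - d"
  shows "Pfun S lam d x = Sld S lam d x"
proof (cases "x < 2*pi - d")
  case True then show ?thesis using red_id[of "-d" x] x by (simp add: Pfun_def)
next
  case False
  then have "x = 2*pi - d" using x by simp
  moreover have "red (-d) (2*pi - d) = -d" using red_shift[of "-d" "2*pi - d"] red_id[of "-d" "-d"] pi_gt_zero by simp
  ultimately show ?thesis using Sld_end[OF S p] Sld_left[OF S p, of "-d"] p par_def by (simp add: Pfun_def)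
qed

lemma P_eq_F:
  assumes S: "Sok S" and p: "par d lam" and x: "-d < x" "x < 2*pi - d + lam"
  shows "Pfun S lam d x = Ffun S lam d x"
proof (cases "x \<le> 2*pi - d")
  case True then show ?thesis using P_eq_Sld[OF S p] F_eq_Sld[OF S p] x by simp
next
  case False
  have l: "0 < lam" "3*lam \<le> d" "d \<le> pi" using p par_def by auto
  have "red (-d) x = x - 2*pi" using red_shift[of "-d" x] red_id[of "-d" "x - 2*pi"] False x l by simp
  then have "Pfun S lam d x = Sld S lam d (x - 2*pi)" by (simp add: Pfun_def)
  also have "\<dots> = 1 - gam d" using Sld_left[OF S p] False x by simp
  also have "\<dots> = Ffun S lam d x" using F_right[OF S p] False x by simp
  finally show ?thesis .
qed

lemma Cinf_shift: "Cinf f \<Longrightarrow> Cinf (\<lambda>x. f (x + c))"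
  using Cinf_affine[of f 1 c] by simp

lemma F_Cinf: assumes "Sok S" shows "Cinf (Ffun S lam d)"
proof -
  have "Cinf S" using assms Sok_def by auto
  then show ?thesis unfolding Ffun_def[abs_def]
    by (intro Cinf_comb Cinf_affine)
qed

lemma P_Cinf:
  assumes S: "Sok S" and p: "par d lam"
  shows "Cinf (Pfun S lam d)"
proof (rule Cinf_local)
  fix x0
  have l: "0 < lam" "3*lam \<le> d" "d \<le> pi" using p par_def by auto
  define a where "a = -d + lam/2"
  define k where "k = \<lfloor>(x0 - a)/(2*pi)\<rfloor>"
  have y: "a \<le> x0 - 2*pi * of_int k" "x0 - 2*pi * of_int k < a + 2*pi"
    using red_bounds[of a x0] unfolding red_def k_def by auto
  define U where "U = {x. -d < x - 2*pi * of_int k \<and> x - 2*pi * of_int k < 2*pi - d + lam}"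
  have "open U" unfolding U_def by (intro open_Collect_conj open_Collect_less continuous_intros)
  moreover have "x0 \<in> U" using y l unfolding U_def a_def by auto
  moreover have "Cinf (\<lambda>x. Ffun S lam d (x + (- 2*pi * of_int k)))" by (intro Cinf_shift F_Cinf S)
  moreover have "\<forall>x\<in>U. Pfun S lam d x = Ffun S lam d (x + (- 2*pi * of_int k))"
  proof
    fix x assume "x \<in> U"
    have "Pfun S lam d x = Pfun S lam d (x + 2*pi * of_int (-k))"
      using periodic_int[OF P_periodic] by metis
    also have "\<dots> = Ffun S lam d (x + 2*pi * of_int (-k))"
      using P_eq_F[OF S p] \<open>x \<in> U\<close> unfolding U_def by simp
    finally show "Pfun S lam d x = Ffun S lam d (x + (- 2*pi * of_int k))" by simp
  qed
  ultimately show "\<exists>U h. open U \<and> x0 \<in> U \<and> Cinf h \<and> (\<forall>x\<in>U. Pfun S lam d x = h x)" by blast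
qed



lemma integral_sint:
  assumes g: "continuous_on UNIV g" and "a \<le> b"
  shows "integral {a..b} g = sint g b - sint g a"
proof -
  define c where "c = min a 0"
  have i: "g integrable_on {c..b}" using g by (intro integrable_continuous_interval continuous_on_subset[OF g]) auto
  have "integral {c..a} g + integral {a..b} g = integral {c..b} g"
    by (rule Henstock_Kurzweil_Integration.integral_combine) (use assms i c_def in auto)
  then show ?thesis using sint_alt[OF g, of c a] sint_alt[OF g, of c b] assms c_def by simp
qed

lemma sint_shift_const:
  assumes g: "continuous_on UNIV g" and pg: "periodic2pi g"
  shows "sint g (t + 2*pi) - sint g t = sint g (-pi + 2*pi) - sint g (-pi)"
proof -
  have D: "((\<lambda>t. sint g (t + 2*pi) - sint g t) has_real_derivative 0) (at x)" for x
  proof -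
    have "((\<lambda>t. sint g (t + 2*pi)) has_real_derivative g (x + 2*pi)) (at x)"
      using sint_deriv[OF g, of "x + 2*pi"] DERIV_shift by blast
    then have "((\<lambda>t. sint g (t + 2*pi) - sint g t) has_real_derivative g (x + 2*pi) - g x) (at x)"
      using DERIV_diff sint_deriv[OF g] by blast
    moreover have "g (x + 2*pi) = g x" using pg periodic2pi_def by auto
    ultimately show ?thesis by simp
  qed
  show ?thesis using DERIV_isconst_all[of "\<lambda>t. sint g (t + 2*pi) - sint g t"] D by blast
qed

lemma integral_period:
  assumes g: "continuous_on UNIV g" and pg: "periodic2pi g"
  shows "integral {a..a + 2*pi} g = integral {-pi..pi} g"
  using integral_sint[OF g, of a "a + 2*pi"] integral_sint[OF g, of "-pi" pi] sint_shift_const[OF g pg, of a]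
  by simp

lemma sint_affine_deriv:
  assumes g: "continuous_on UNIV g"
  shows "((\<lambda>x. sint g (a*x+b)) has_real_derivative g (a*x+b) * a) (at x)"
proof -
  have "((\<lambda>x. a*x+b) has_real_derivative a) (at x)" by (auto intro!: derivative_eq_intros)
  from DERIV_chain2[OF sint_deriv[OF g] this] show ?thesis .
qed

lemma Cinf_cont: assumes "Cinf f" shows "continuous_on UNIV f"
proof -
  have "((deriv^^0) f has_real_derivative (deriv^^Suc 0) f x) (at x)" for x
    using assms Cinf_iff by blast
  then have "(f has_real_derivative deriv f x) (at x)" for x by simp
  then show ?thesis by (rule cont_of_deriv)
qed

lemma S_cont: "Sok S \<Longrightarrow> continuous_on UNIV S"
  using Cinf_cont unfolding Sok_def by blast

lemma Sg_even:
  assumes S: "Sok S" shows "sint S (- x) = sint S x"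
proof -
  have c: "continuous_on UNIV S" using S_cont[OF S] .
  have odd: "S (-y) = - S y" for y using S Sok_def by auto
  have "((\<lambda>x. sint S x - sint S (-x)) has_real_derivative 0) (at y)" for y
  proof -
    have "((\<lambda>x. sint S (-1*x+0)) has_real_derivative S (-1*y+0) * (-1)) (at y)"
      by (rule sint_affine_deriv[OF c])
    then have "((\<lambda>x. sint S (-x)) has_real_derivative - S (-y)) (at y)" by simp
    from DERIV_diff[OF sint_deriv[OF c] this]
    show ?thesis using odd by simp
  qed
  then have "sint S x - sint S (-x) = sint S 0 - sint S (-0)" using DERIV_isconst_all by blast
  then show ?thesis by simp
qed

lemma Sg_pos:
  assumes S: "Sok S" and t: "t \<ge> 1" shows "sint S t = sint S 1 + (t - 1)"
proof -
  have "integral {1..t} S = integral {1..t} (\<lambda>_. 1::real)"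
    by (rule integral_cong) (use S_one[OF S] in auto)
  also have "\<dots> = t - 1" using t by simp
  finally show ?thesis using integral_sint[OF S_cont[OF S] t] by simp
qed

lemma Sg_neg:
  assumes S: "Sok S" and t: "t \<le> -1" shows "sint S t = sint S 1 + (- t - 1)"
  using Sg_pos[OF S, of "-t"] Sg_even[OF S, of t] t by simp

lemma integral_F:
  assumes S: "Sok S" and p: "par d lam"
  shows "integral {-d..2*pi-d} (Ffun S lam d) = 0"
proof -
  have l: "0 < lam" "3*lam \<le> d" "d \<le> pi" using p par_def by auto
  have c: "continuous_on UNIV S" using S_cont[OF S] .
  define Phi where "Phi x = lam * sint S ((1/lam)*x + (-2)) - lam * sint S ((1/lam)*x + (d - 2*lam)/lam)
     + (1 - gam d) * x" for x
  have "(Phi has_real_derivative Ffun S lam d x) (at x)" for x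
  proof -
    have "(Phi has_real_derivative lam * (S ((1/lam)*x + (-2)) * (1/lam)) -
           lam * (S ((1/lam)*x + (d - 2*lam)/lam) * (1/lam)) + (1 - gam d) * 1) (at x)"
      unfolding Phi_def[abs_def]
      by (intro DERIV_add DERIV_diff DERIV_cmult sint_affine_deriv[OF c] DERIV_ident)
    then show ?thesis using l by (simp add: Ffun_def)
  qed
  then have "(Ffun S lam d has_integral (Phi (2*pi-d) - Phi (-d))) {-d..2*pi-d}"
    using l pi_gt_zero
    by (intro fundamental_theorem_of_calculus)
       (auto simp: has_real_derivative_iff_has_vector_derivative[symmetric] intro: has_field_derivative_at_within)
  moreover have "Phi (2*pi-d) - Phi (-d) = 0"
  proof -
    define A where "A = (1/lam)*(2*pi-d) + (-2)"
    define C where "C = (1/lam)*(2*pi-d) + (d - 2*lam)/lam"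
    define B where "B = (1/lam)*(-d) + (-2)"
    have e: "(1/lam)*(-d) + (d - 2*lam)/lam = -2" using l by (simp add: field_simps)
    have A: "lam * A = 2*pi - d - 2*lam" and C: "lam * C = 2*pi - 2*lam" and B: "lam * B = - d - 2*lam"
      using l by (simp_all add: A_def B_def C_def field_simps)
    have "A \<ge> 1" using l pi_gt_zero by (simp add: A_def field_simps)
    have "C \<ge> 1" using l pi_gt_zero by (simp add: C_def field_simps)
    have "B \<le> -1" using l pi_gt_zero by (simp add: B_def field_simps)
    have "Phi (2*pi-d) - Phi (-d) = lam * sint S A - lam * sint S C + (1 - gam d) * (2*pi-d)
       - (lam * sint S B - lam * sint S (-2) + (1 - gam d) * (-d))"
      unfolding Phi_def A_def[symmetric] C_def[symmetric] B_def[symmetric] e by simp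
    also have "\<dots> = lam * (sint S 1 + (A - 1)) - lam * (sint S 1 + (C - 1))
        + (1 - gam d) * (2*pi-d) - (lam * (sint S 1 + (- B - 1)) - lam * (sint S 1 + (- (-2) - 1)) + (1 - gam d) * (-d))"
      by (simp only: Sg_pos[OF S \<open>A \<ge> 1\<close>] Sg_pos[OF S \<open>C \<ge> 1\<close>] Sg_neg[OF S \<open>B \<le> -1\<close>]
         Sg_neg[OF S, of "-2"])
    also have "\<dots> = lam * A - lam * C + lam * B + 2 * lam + (1 - gam d) * (2*pi)"
      by (simp add: algebra_simps)
    also have "\<dots> = 0" unfolding A B C gam_def using pi_gt_zero by (simp add: field_simps)
    finally show ?thesis .
  qed
  ultimately show ?thesis by (simp add: integral_unique)
qed

lemma P_good:
  assumes S: "Sok S" and p: "par d lam"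
  shows "good (Pfun S lam d)"
proof -
  have cP: "continuous_on UNIV (Pfun S lam d)"
    using Cinf_cont P_Cinf[OF S p] by blast
  have i1: "integral {-d..-d + 2*pi} (Pfun S lam d) = integral {-pi..pi} (Pfun S lam d)"
    by (rule integral_period[OF cP P_periodic])
  have e: "-d + 2*pi = 2*pi - d" by simp
  have "integral {-pi..pi} (Pfun S lam d) = integral {-d..2*pi-d} (Pfun S lam d)"
    using i1 unfolding e by simp
  also have "\<dots> = integral {-d..2*pi-d} (Ffun S lam d)"
    by (rule integral_cong) (use P_eq_Sld[OF S p] F_eq_Sld[OF S p] in auto)
  also have "\<dots> = 0" using integral_F[OF S p] .
  finally show ?thesis using cP P_periodic unfolding good_def by blast
qed



definition wfun :: "real \<Rightarrow> real \<Rightarrow> real" where "wfun d x = \<bar>x\<bar> - gam d * x"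
definition Wfun :: "real \<Rightarrow> real \<Rightarrow> real" where "Wfun d x = wfun d (red (-d) x)"
definition Wc :: "real \<Rightarrow> real \<Rightarrow> real" where
  "Wc d x = Wfun d x - integral {-pi..pi} (Wfun d) / (2*pi)"

lemma red_closed:
  assumes "a + 2*pi * of_int j \<le> x" "x \<le> a + 2*pi * of_int j + 2*pi" "w a = w (a + 2*pi)"
  shows "w (red a x) = w (x - 2*pi * of_int j)"
proof (cases "x < a + 2*pi * of_int j + 2*pi")
  case True
  have "red a x = red a (x + 2*pi * of_int (-j))" using periodic_int[OF red_periodic] by metis
  also have "\<dots> = x - 2*pi * of_int j" using red_id[of a "x + 2*pi * of_int (-j)"] True assms(1) by simp
  finally show ?thesis by simp
next
  case False
  then have x: "x = a + 2*pi * of_int (j + 1)" using assms(2) by (simp add: algebra_simps)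
  have "red a x = red a (a + 2*pi * of_int (j+1))" using x by simp
  also have "\<dots> = red a a" using periodic_int[OF red_periodic] by metis
  also have "\<dots> = a" using red_id[of a a] pi_gt_zero by simp
  finally show ?thesis using assms(3) x by (simp add: algebra_simps)
qed

lemma PE_cont:
  assumes w: "continuous_on UNIV w" and wa: "w a = w (a + 2*pi)"
  shows "continuous_on UNIV (\<lambda>x. w (red a x))"
proof -
  have "isCont (\<lambda>x. w (red a x)) x0" for x0
  proof -
    define k where "k = \<lfloor>(x0 - a)/(2*pi)\<rfloor>"
    have y: "a \<le> x0 - 2*pi * of_int k" "x0 - 2*pi * of_int k < a + 2*pi"
      using red_bounds[of a x0] unfolding red_def k_def by auto
    define I1 where "I1 = {a + 2*pi * of_int (k-1) .. a + 2*pi * of_int (k-1) + 2*pi}"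
    define I2 where "I2 = {a + 2*pi * of_int k .. a + 2*pi * of_int k + 2*pi}"
    have c: "continuous_on {a + 2*pi * of_int j .. a + 2*pi * of_int j + 2*pi} (\<lambda>x. w (red a x))" for j
    proof (rule continuous_on_eq[where f="\<lambda>x. w (x - 2*pi * of_int j)"])
      show "continuous_on {a + 2*pi * of_int j .. a + 2*pi * of_int j + 2*pi} (\<lambda>x. w (x - 2*pi * of_int j))"
        by (intro continuous_on_compose2[OF w] continuous_intros) auto
      show "\<And>x. x \<in> {a + 2*pi * of_int j .. a + 2*pi * of_int j + 2*pi} \<Longrightarrow>
            w (x - 2*pi * of_int j) = w (red a x)"
        using red_closed[of a j _ w] wa by auto
    qed
    have "continuous_on (I1 \<union> I2) (\<lambda>x. w (red a x))"
      unfolding I1_def I2_def by (intro continuous_on_closed_Un c) auto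
    moreover have "I1 \<union> I2 = {a + 2*pi * of_int (k-1) .. a + 2*pi * of_int k + 2*pi}"
      unfolding I1_def I2_def by (auto simp: algebra_simps)
    moreover have "x0 \<in> interior {a + 2*pi * of_int (k-1) .. a + 2*pi * of_int k + 2*pi}"
      using y pi_gt_zero by (auto simp: algebra_simps)
    ultimately show ?thesis using continuous_on_interior by metis
  qed
  then show ?thesis by (simp add: continuous_at_imp_continuous_on)
qed

lemma W_cont: assumes "0 < d" "d \<le> pi" shows "continuous_on UNIV (Wfun d)"
proof -
  have "continuous_on UNIV (wfun d)" unfolding wfun_def[abs_def] by (intro continuous_intros)
  moreover have "wfun d (-d) = wfun d (-d + 2*pi)"
    using assms pi_gt_zero unfolding wfun_def gam_def by (simp add: field_simps abs_if)
  ultimately show ?thesis unfolding Wfun_def[abs_def] by (rule PE_cont)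
qed

lemma W_periodic: "periodic2pi (Wfun d)"
  using red_periodic unfolding periodic2pi_def Wfun_def by simp

lemma w_deriv:
  assumes "x \<noteq> 0" shows "(wfun d has_real_derivative sgn x - gam d) (at x)"
proof (cases "x > 0")
  case True
  have "((\<lambda>y. y - gam d * y) has_real_derivative 1 - gam d * 1) (at x)"
    by (auto intro!: derivative_eq_intros)
  then have "((\<lambda>y. y - gam d * y) has_real_derivative sgn x - gam d) (at x)" using True by simp
  then show ?thesis
    by (rule has_field_derivative_transform_within_open[where S="{0<..}"]) (use True in \<open>auto simp: wfun_def\<close>)
next
  case False
  then have n: "x < 0" using assms by simp
  have "((\<lambda>y. - y - gam d * y) has_real_derivative - 1 - gam d * 1) (at x)"
    by (auto intro!: derivative_eq_intros)
  then have "((\<lambda>y. - y - gam d * y) has_real_derivative sgn x - gam d) (at x)" using n by simp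
  then show ?thesis
    by (rule has_field_derivative_transform_within_open[where S="{..<0}"]) (use n in \<open>auto simp: wfun_def\<close>)
qed

lemma W_deriv:
  assumes "x \<in> {-d<..<2*pi-d} - {0}"
  shows "(Wfun d has_real_derivative sgn x - gam d) (at x)"
proof -
  have "(wfun d has_real_derivative sgn x - gam d) (at x)" using w_deriv assms by auto
  then show ?thesis
    by (rule has_field_derivative_transform_within_open[where S="{-d<..<2*pi-d}"])
       (use assms red_id[of "-d"] in \<open>auto simp: Wfun_def\<close>)
qed

lemma Wc_deriv:
  assumes "x \<in> {-d<..<2*pi-d} - {0}"
  shows "(Wc d has_real_derivative sgn x - gam d) (at x)"
proof -
  have "((\<lambda>x. Wfun d x - integral {-pi..pi} (Wfun d) / (2*pi)) has_real_derivative sgn x - gam d - 0) (at x)"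
    by (intro DERIV_diff W_deriv assms DERIV_const)
  then show ?thesis by (simp add: Wc_def[abs_def])
qed

lemma Wc_good: assumes "0 < d" "d \<le> pi" shows "good (Wc d)"
proof -
  have c: "continuous_on UNIV (Wfun d)" using W_cont[OF assms] .
  have "continuous_on UNIV (Wc d)" unfolding Wc_def[abs_def] by (intro continuous_intros c)
  moreover have "periodic2pi (Wc d)" using W_periodic unfolding periodic2pi_def Wc_def by simp
  moreover have "integral {-pi..pi} (Wc d) = 0"
    unfolding Wc_def[abs_def] by (simp add: integral_const_sub[OF c])
  ultimately show ?thesis by (simp add: good_def)
qed

lemma Erdl_eq:
  assumes S: "Sok S" and p: "par d lam"
  shows "Erdl S r d lam = (prim^^r) (Pfun S lam d)"
  unfolding Erdl_def
proof (rule the_equality)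
  let ?P = "Pfun S lam d"
  let ?G = "(prim^^r) ?P"
  have gP: "good ?P" using P_good[OF S p] .
  have cG: "Cinf ?G" using Cinf_iter[OF gP P_Cinf[OF S p]] .
  have gG: "good ?G" using iter_good[OF gP] .
  have top: "(deriv^^r) ?G = ?P" using derivs_iter[OF gP, of r r] by simp
  show "periodic2pi ?G \<and> Cinf ?G \<and> integral {- pi..pi} ?G = 0 \<and>
    (\<forall>x\<in>{- d..2 * pi - d}. (deriv ^^ r) ?G x = Sld S lam d x)"
    using gG cG top P_eq_Sld[OF S p] unfolding good_def by auto
  fix f
  assume H: "periodic2pi f \<and> Cinf f \<and> integral {- pi..pi} f = 0 \<and>
    (\<forall>x\<in>{- d..2 * pi - d}. (deriv ^^ r) f x = Sld S lam d x)"
  have pf: "periodic2pi f" using H by blast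
  have topf: "(deriv^^r) f = ?P"
  proof
    fix x
    have "(deriv^^r) f x = (deriv^^r) f (red (-d) x)"
      by (rule sym, rule periodic_red[OF periodic_derivs[OF pf]])
    also have "\<dots> = Sld S lam d (red (-d) x)"
      using H red_bounds[of "-d" x] by auto
    finally show "(deriv^^r) f x = ?P x" by (simp add: Pfun_def)
  qed
  have dfj: "\<forall>j<r. \<forall>x. ((deriv^^j) f has_real_derivative (deriv^^Suc j) f x) (at x)"
    using H unfolding Cinf_iff by blast
  have dGj: "\<forall>j<r. \<forall>x. ((deriv^^j) ?G has_real_derivative (deriv^^Suc j) ?G x) (at x)"
    using cG unfolding Cinf_iff by blast
  have topf': "(deriv^^r) f = (deriv^^r) ?G" using topf top by simp
  have iF: "integral {-pi..pi} f = 0" using H by blast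
  have pG: "periodic2pi ?G" and iG: "integral {-pi..pi} ?G = 0" using gG good_def by auto
  show "f = ?G"
    by (rule uniq_down[OF dfj dGj pf pG iF iG topf'])
qed

lemma Erd_eq:
  assumes p: "0 < d" "d \<le> pi"
  shows "Erd r d = (prim^^(r-1)) (Wc d)"
  unfolding Erd_def
proof (rule the_equality)
  let ?m = "r - 1"
  let ?G = "(prim^^?m) (Wc d)"
  have gW: "good (Wc d)" using Wc_good[OF p] .
  have cG: "Ck ?m ?G" using Ck_iter[OF gW] by simp
  have gG: "good ?G" using iter_good[OF gW] .
  have top: "(deriv^^?m) ?G = Wc d" using derivs_iter[OF gW, of ?m ?m] by simp
  show "periodic2pi ?G \<and> Ck ?m ?G \<and> integral {- pi..pi} ?G = 0 \<and>
    (\<forall>x\<in>{- d<..<2 * pi - d} - {0}. ((deriv ^^ ?m) ?G has_real_derivative sgn x - gam d) (at x))"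
    using gG cG top Wc_deriv unfolding good_def by auto
  fix f
  assume H: "periodic2pi f \<and> Ck ?m f \<and> integral {- pi..pi} f = 0 \<and>
    (\<forall>x\<in>{- d<..<2 * pi - d} - {0}. ((deriv ^^ ?m) f has_real_derivative sgn x - gam d) (at x))"
  have dfj: "\<forall>j<?m. \<forall>x. ((deriv^^j) f has_real_derivative (deriv^^Suc j) f x) (at x)"
    using H unfolding Ck_def by blast
  define Dl where "Dl x = (deriv^^?m) f x - Wc d x" for x
  have cf: "continuous_on UNIV ((deriv^^?m) f)" using H unfolding Ck_def by blast
  have cD: "continuous_on UNIV Dl" unfolding Dl_def[abs_def]
    using gW good_def by (intro continuous_intros cf) auto
  have dD: "(Dl has_real_derivative 0) (at x)" if "x \<in> {-d<..<2*pi-d} - {0}" for x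
  proof -
    have "(Dl has_real_derivative (sgn x - gam d) - (sgn x - gam d)) (at x)"
      unfolding Dl_def[abs_def] using H that Wc_deriv[OF that] by (intro DERIV_diff) auto
    then show ?thesis by simp
  qed
  have c1: "Dl x = Dl (-d)" if "-d \<le> x" "x \<le> 0" for x
  proof (rule DERIV_isconst2[of "-d" 0])
    show "-d < 0" using p by simp
    show "continuous_on {-d..0} Dl" by (rule continuous_on_subset[OF cD]) simp
    fix y assume "-d < y" "y < 0"
    then show "(Dl has_real_derivative 0) (at y)" using p pi_gt_zero by (intro dD) auto
  qed (use that in auto)
  have c2: "Dl x = Dl 0" if "0 \<le> x" "x \<le> 2*pi-d" for x
  proof (rule DERIV_isconst2[of 0 "2*pi-d"])
    show "0 < 2*pi-d" using p pi_gt_zero by simp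
    show "continuous_on {0..2*pi-d} Dl" by (rule continuous_on_subset[OF cD]) simp
    fix y assume "0 < y" "y < 2*pi-d"
    then show "(Dl has_real_derivative 0) (at y)" using p pi_gt_zero by (intro dD) auto
  qed (use that in auto)
  have pD: "periodic2pi Dl" using periodic_derivs[of f ?m] H gW unfolding good_def periodic2pi_def Dl_def
    by simp
  have cst: "Dl x = Dl 0" for x
  proof -
    have "Dl x = Dl (red (-d) x)" by (rule sym, rule periodic_red[OF pD])
    also have "\<dots> = Dl 0"
    proof (cases "red (-d) x \<le> 0")
      case True
      then have "Dl (red (-d) x) = Dl (-d)" using red_bounds[of "-d" x] c1 by blast
      also have "\<dots> = Dl 0" using c1[of 0] p by simp
      finally show ?thesis .
    next
      case False
      then show ?thesis using red_bounds[of "-d" x] by (intro c2) auto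
    qed
    finally show ?thesis .
  qed
  have mf: "integral {-pi..pi} ((deriv^^?m) f) = 0"
  proof (cases ?m)
    case 0 then show ?thesis using H by simp
  next
    case (Suc i)
    have "i < ?m" using Suc by simp
    then have "\<forall>x. ((deriv^^i) f has_real_derivative (deriv^^Suc i) f x) (at x)"
      using dfj by blast
    then show ?thesis unfolding Suc
      using mean0_of_deriv[OF periodic_derivs[of f i]] H by blast
  qed
  have eqf: "(deriv^^?m) f = (\<lambda>x. Wc d x - (- Dl 0))"
  proof
    fix x show "(deriv^^?m) f x = Wc d x - (- Dl 0)" using cst[of x] unfolding Dl_def by linarith
  qed
  have "integral {-pi..pi} ((deriv^^?m) f) = 0 - 2*pi*(- Dl 0)"
    unfolding eqf using integral_const_sub[of "Wc d" "- Dl 0"] gW good_def by auto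
  then have "Dl 0 = 0" using mf by simp
  then have topf: "(deriv^^?m) f = (deriv^^?m) ?G" using eqf top by simp
  have dGj: "\<forall>j<?m. \<forall>x. ((deriv^^j) ?G has_real_derivative (deriv^^Suc j) ?G x) (at x)"
    using cG unfolding Ck_def by blast
  have pf: "periodic2pi f" and iF: "integral {-pi..pi} f = 0" using H by auto
  have pG: "periodic2pi ?G" and iG: "integral {-pi..pi} ?G = 0" using gG good_def by auto
  show "f = ?G"
    by (rule uniq_down[OF dfj dGj pf pG iF iG topf])
qed



lemma est_interval:
  assumes "a \<le> b" "continuous_on {a..b} f"
    "\<And>x. a < x \<Longrightarrow> x < b \<Longrightarrow> (f has_real_derivative f' x) (at x)"
    "\<And>x. a < x \<Longrightarrow> x < b \<Longrightarrow> \<bar>f' x\<bar> \<le> M"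
  shows "\<bar>f b - f a\<bar> \<le> M * (b - a)"
proof (cases "a = b")
  case True then show ?thesis by simp
next
  case False
  then have ab: "a < b" using assms(1) by simp
  have "\<And>x. a < x \<Longrightarrow> x < b \<Longrightarrow> f differentiable at x"
    using assms(3) real_differentiable_def by blast
  from MVT[OF ab assms(2) this] obtain l z where z: "a < z" "z < b" "(f has_real_derivative l) (at z)"
    "f b - f a = (b - a) * l" by blast
  have "l = f' z" using DERIV_unique z(3) assms(3)[OF z(1,2)] by blast
  then have "\<bar>l\<bar> \<le> M" using assms(4)[OF z(1,2)] by simp
  then have "(b - a) * \<bar>l\<bar> \<le> (b - a) * M" using ab by (intro mult_left_mono) auto
  then show ?thesis using z(4) ab by (simp add: abs_mult mult.commute)
qed

lemma zero_exists:
  fixes D :: "real \<Rightarrow> real"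
  assumes c: "continuous_on {-pi..pi} D" and i: "integral {-pi..pi} D = 0"
  shows "\<exists>z\<in>{-pi..pi}. D z = 0"
proof -
  have int: "D integrable_on {-pi..pi}" by (rule integrable_continuous_real[OF c])
  have ne: "{-pi..pi} \<noteq> {}" using pi_gt_zero by simp
  obtain x1 where x1: "x1 \<in> {-pi..pi}" "\<forall>y\<in>{-pi..pi}. D x1 \<le> D y"
    using continuous_attains_inf[OF compact_Icc ne c] by blast
  obtain x2 where x2: "x2 \<in> {-pi..pi}" "\<forall>y\<in>{-pi..pi}. D y \<le> D x2"
    using continuous_attains_sup[OF compact_Icc ne c] by blast
  have "D x1 \<le> 0"
  proof (rule ccontr)
    assume "\<not> D x1 \<le> 0"
    have "integral {-pi..pi} (\<lambda>_. D x1) \<le> integral {-pi..pi} D"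
      by (rule integral_le) (use int x1 in auto)
    moreover have "pi * D x1 > 0" using \<open>\<not> D x1 \<le> 0\<close> pi_gt_zero by (intro mult_pos_pos) auto
    ultimately show False using i by simp
  qed
  moreover have "D x2 \<ge> 0"
  proof (rule ccontr)
    assume "\<not> D x2 \<ge> 0"
    have "integral {-pi..pi} D \<le> integral {-pi..pi} (\<lambda>_. D x2)"
      by (rule integral_le) (use int x2 in auto)
    moreover have "pi * D x2 < 0" using \<open>\<not> D x2 \<ge> 0\<close> pi_gt_zero by (intro mult_pos_neg) auto
    ultimately show False using i by simp
  qed
  ultimately have "0 \<in> closed_segment (D x1) (D x2)" by (auto simp: closed_segment_eq_real_ivl)
  moreover have sub: "closed_segment x1 x2 \<subseteq> {-pi..pi}"
    using x1(1) x2(1) by (auto simp: closed_segment_eq_real_ivl)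
  moreover have "continuous_on (closed_segment x1 x2) D" using continuous_on_subset[OF c sub] .
  ultimately obtain z where "z \<in> closed_segment x1 x2" "D z = 0"
    using IVT'_closed_segment_real by blast
  then show ?thesis using sub by blast
qed

lemma prim_lip:
  assumes g1: "good g1" and g2: "good g2" and M: "\<And>x. \<bar>g1 x - g2 x\<bar> \<le> M"
  shows "\<bar>prim g1 x - prim g2 x\<bar> \<le> pi * M"
proof -
  define D where "D x = prim g1 x - prim g2 x" for x
  have c1: "continuous_on UNIV g1" "continuous_on UNIV g2" using g1 g2 good_def by auto
  have dD: "(D has_real_derivative g1 y - g2 y) (at y)" for y
    unfolding D_def[abs_def] by (intro DERIV_diff prim_deriv c1)
  have cD: "continuous_on UNIV D" by (rule cont_of_deriv[OF dD])
  have pg: "good (prim g1)" "good (prim g2)" using prim_good g1 g2 by auto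
  have pD: "periodic2pi D" using pg unfolding good_def periodic2pi_def D_def by simp
  have cp: "continuous_on UNIV (prim g1)" "continuous_on UNIV (prim g2)" using pg good_def by auto
  have ip: "prim g1 integrable_on {-pi..pi}" "prim g2 integrable_on {-pi..pi}"
    by (rule integrable_continuous_real, rule continuous_on_subset[OF cp(1)], simp)
       (rule integrable_continuous_real, rule continuous_on_subset[OF cp(2)], simp)
  have "integral {-pi..pi} D = integral {-pi..pi} (prim g1) - integral {-pi..pi} (prim g2)"
    unfolding D_def[abs_def] by (rule integral_diff[OF ip])
  then have iD: "integral {-pi..pi} D = 0" using pg good_def by simp
  obtain z where z: "z \<in> {-pi..pi}" "D z = 0"
    using zero_exists[OF continuous_on_subset[OF cD] iD] by blast
  define y where "y = red (z - pi) x"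
  have y: "z - pi \<le> y" "y < z + pi" using red_bounds[of "z - pi" x] unfolding y_def by auto
  have Dxy: "D x = D y" unfolding y_def by (rule sym, rule periodic_red[OF pD])
  have "\<bar>D (max y z) - D (min y z)\<bar> \<le> M * (max y z - min y z)"
    by (rule est_interval[OF _ continuous_on_subset[OF cD] dD M]) auto
  moreover have "\<bar>D y - D z\<bar> = \<bar>D (max y z) - D (min y z)\<bar>" by (cases "y \<le> z") auto
  moreover have "M \<ge> 0" using M[of 0] by linarith
  moreover have "max y z - min y z \<le> pi" using y by auto
  ultimately have "\<bar>D y - D z\<bar> \<le> M * pi"
    by (metis mult_left_mono order_trans)
  then show ?thesis using Dxy z(2) unfolding D_def by (simp add: mult.commute)
qed

lemma iter_lip:
  assumes g1: "good g1" and g2: "good g2" and M: "\<And>x. \<bar>g1 x - g2 x\<bar> \<le> M"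
  shows "\<bar>(prim^^n) g1 x - (prim^^n) g2 x\<bar> \<le> pi^n * M"
proof (induction n arbitrary: x)
  case 0 then show ?case using M by simp
next
  case (Suc n)
  have "\<bar>prim ((prim^^n) g1) x - prim ((prim^^n) g2) x\<bar> \<le> pi * (pi^n * M)"
    by (rule prim_lip[OF iter_good[OF g1] iter_good[OF g2] Suc.IH])
  then show ?case by (simp add: mult.assoc)
qed



lemma T_bound:
  assumes S: "Sok S" shows "\<bar>Stilde S lam d x - sgn x\<bar> \<le> 2"
proof -
  have "\<bar>Stilde S lam d x\<bar> \<le> 1" unfolding Stilde_def using S_bound[OF S] by auto
  moreover have "\<bar>sgn x\<bar> \<le> (1::real)" by (simp add: abs_sgn_eq)
  ultimately show ?thesis by linarith
qed

lemma T_zero1: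
  assumes S: "Sok S" and p: "par d lam" and x: "3*lam \<le> x"
  shows "Stilde S lam d x - sgn x = 0"
proof -
  have l: "0 < lam" using p par_def by auto
  have "(x - 2*lam)/lam \<ge> 1" "x > 0" using x l by (simp_all add: field_simps)
  then show ?thesis using S_one[OF S] by (simp add: Stilde_def)
qed

lemma T_zero2:
  assumes S: "Sok S" and p: "par d lam" and x: "-d + 3*lam \<le> x" "x < 0"
  shows "Stilde S lam d x - sgn x = 0"
proof -
  have l: "0 < lam" using p par_def by auto
  have "(x - 2*lam + d)/lam \<ge> 1" using x l by (simp_all add: field_simps)
  then show ?thesis using S_one[OF S] x by (simp add: Stilde_def)
qed

lemma main_est:
  assumes S: "Sok S" and p: "par d lam"
  shows "\<bar>prim (Pfun S lam d) x - Wc d x\<bar> \<le> 24 * lam"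
proof -
  have l: "0 < lam" "3*lam \<le> d" "d \<le> pi" "0 < d" using p par_def by auto
  let ?P = "Pfun S lam d"
  define D where "D x = prim ?P x - Wc d x" for x
  define T where "T x = Stilde S lam d x - sgn x" for x
  have gP: "good ?P" using P_good[OF S p] .
  have gW: "good (Wc d)" using Wc_good[OF l(4) l(3)] .
  have gp: "good (prim ?P)" using prim_good[OF gP] .
  have cD: "continuous_on UNIV D" unfolding D_def[abs_def]
    using gp gW good_def by (intro continuous_intros) auto
  have pD: "periodic2pi D" using gp gW unfolding good_def periodic2pi_def D_def by simp
  have iD: "integral {-pi..pi} D = 0"
  proof -
    have cp: "continuous_on UNIV (prim ?P)" "continuous_on UNIV (Wc d)" using gp gW good_def by auto
    have ip: "prim ?P integrable_on {-pi..pi}" "Wc d integrable_on {-pi..pi}"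
      by (rule integrable_continuous_real, rule continuous_on_subset[OF cp(1)], simp)
         (rule integrable_continuous_real, rule continuous_on_subset[OF cp(2)], simp)
    have "integral {-pi..pi} D = integral {-pi..pi} (prim ?P) - integral {-pi..pi} (Wc d)"
      unfolding D_def[abs_def] by (rule integral_diff[OF ip])
    then show ?thesis using gp gW good_def by simp
  qed
  have dD: "(D has_real_derivative T x) (at x)" if "x \<in> {-d<..<2*pi-d} - {0}" for x
  proof -
    have cP: "continuous_on UNIV ?P" using gP good_def by auto
    have "(D has_real_derivative ?P x - (sgn x - gam d)) (at x)"
      unfolding D_def[abs_def] by (intro DERIV_diff prim_deriv cP Wc_deriv that)
    moreover have "?P x = Sld S lam d x" using P_eq_Sld[OF S p] that by auto
    ultimately show ?thesis by (simp add: T_def Sld_def)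
  qed
  have TB: "\<bar>T x\<bar> \<le> 2" for x unfolding T_def by (rule T_bound[OF S])
  have cI: "continuous_on {a..b} D" for a b by (rule continuous_on_subset[OF cD]) simp
  have pi2: "pi \<le> 2*pi - d" using l by simp
  have E1: "\<bar>D x - D 0\<bar> \<le> 6*lam" if "0 \<le> x" "x \<le> 3*lam" for x
  proof -
    have "\<bar>D x - D 0\<bar> \<le> 2 * (x - 0)"
      by (rule est_interval[OF that(1) cI, of T]) (use that l pi2 in \<open>auto intro!: dD TB\<close>)
    then show ?thesis using that by simp
  qed
  have E2: "\<bar>D x - D (3*lam)\<bar> \<le> 0" if "3*lam \<le> x" "x \<le> 2*pi-d" for x
  proof -
    have "\<bar>D x - D (3*lam)\<bar> \<le> 0 * (x - 3*lam)"
    proof (rule est_interval[OF that(1) cI, of T])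
      fix y assume y: "3*lam < y" "y < x"
      show "(D has_real_derivative T y) (at y)" using y that l by (intro dD) auto
      show "\<bar>T y\<bar> \<le> 0" using T_zero1[OF S p, of y] y unfolding T_def by simp
    qed
    then show ?thesis by simp
  qed
  have E3: "\<bar>D 0 - D x\<bar> \<le> 0" if "-d + 3*lam \<le> x" "x \<le> 0" for x
  proof -
    have "\<bar>D 0 - D x\<bar> \<le> 0 * (0 - x)"
    proof (rule est_interval[OF that(2) cI, of T])
      fix y assume y: "x < y" "y < 0"
      show "(D has_real_derivative T y) (at y)" using y that l pi_gt_zero by (intro dD) auto
      show "\<bar>T y\<bar> \<le> 0" using T_zero2[OF S p, of y] y that unfolding T_def by simp
    qed
    then show ?thesis by simp
  qed
  have E4: "\<bar>D x - D (-d)\<bar> \<le> 6*lam" if "-d \<le> x" "x \<le> -d + 3*lam" for x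
  proof -
    have "\<bar>D x - D (-d)\<bar> \<le> 2 * (x - (-d))"
      by (rule est_interval[OF that(1) cI, of T]) (use that l pi2 in \<open>auto intro!: dD TB\<close>)
    then show ?thesis using that by simp
  qed
  have Dend: "D (-d) = D (2*pi - d)" using pD unfolding periodic2pi_def by (metis add.commute diff_conv_add_uminus)
  have E23: "\<bar>D (-d) - D (3*lam)\<bar> \<le> 0" using E2[of "2*pi-d"] Dend l pi2 by simp
  have E13: "\<bar>D (3*lam) - D 0\<bar> \<le> 6*lam" using E1[of "3*lam"] l by simp
  have Ein: "\<bar>D x - D 0\<bar> \<le> 12*lam" if "-d \<le> x" "x \<le> 2*pi-d" for x
  proof -
    consider "x \<le> -d + 3*lam" | "-d + 3*lam \<le> x \<and> x \<le> 0" | "0 \<le> x \<and> x \<le> 3*lam" | "3*lam \<le> x"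
      by linarith
    then show ?thesis
    proof cases
      case 1 then show ?thesis using E4[of x] E23 E13 that by linarith
    next
      case 2 then show ?thesis using E3[of x] l by auto
    next
      case 3 then show ?thesis using E1[of x] l by auto
    next
      case 4 then show ?thesis using E2[of x] E13 that by linarith
    qed
  qed
  have Eall: "\<bar>D y - D 0\<bar> \<le> 12*lam" for y
  proof -
    have "D y = D (red (-d) y)" by (rule sym, rule periodic_red[OF pD])
    then show ?thesis using Ein[of "red (-d) y"] red_bounds[of "-d" y] by simp
  qed
  obtain z where "z \<in> {-pi..pi}" "D z = 0" using zero_exists[OF continuous_on_subset[OF cD] iD] by blast
  then have "\<bar>D 0\<bar> \<le> 12*lam" using Eall[of z] by simp
  then have "\<bar>D x\<bar> \<le> 24*lam" using Eall[of x] by linarith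
  then show ?thesis unfolding D_def .
qed

theorem lemma5p2:
  fixes S :: "real \<Rightarrow> real" and r :: nat
  assumes S_smooth: "Cinf S"
    and S_mono: "mono S"
    and S_odd: "\<And>x. S (- x) = - S x"
    and S_sign: "\<And>x. \<bar>x\<bar> \<ge> 1 \<Longrightarrow> S x = sgn x"
    and r_pos: "r \<ge> 1"
  shows "\<exists>c5>0. \<forall>d lam. 0 < d \<and> d \<le> pi \<and> 0 < lam \<and> lam \<le> d / 3 \<longrightarrow>
           unorm (\<lambda>x. Erdl S r d lam x - Erd r d x) \<le> c5 * lam"
proof -
  have S: "Sok S" unfolding Sok_def using assms by blast
  define m where "m = r - 1"
  have r: "r = Suc m" using r_pos m_def by simp
  show ?thesis
  proof (intro exI[of _ "24 * pi^m"] conjI allI impI)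
    show "0 < 24 * pi^m" by simp
    fix d lam assume H: "0 < d \<and> d \<le> pi \<and> 0 < lam \<and> lam \<le> d / 3"
    then have p: "par d lam" unfolding par_def by simp
    have gP: "good (prim (Pfun S lam d))" using prim_good[OF P_good[OF S p]] .
    have gW: "good (Wc d)" using Wc_good H by simp
    have e1: "Erdl S r d lam = (prim^^m) (prim (Pfun S lam d))"
      unfolding Erdl_eq[OF S p] r by (simp add: funpow_Suc_right del: funpow.simps)
    have e2: "Erd r d = (prim^^m) (Wc d)" using Erd_eq[of d r] H m_def by simp
    have b: "\<bar>Erdl S r d lam x - Erd r d x\<bar> \<le> pi^m * (24 * lam)" for x
      unfolding e1 e2 by (rule iter_lip[OF gP gW main_est[OF S p]])
    have "unorm (\<lambda>x. Erdl S r d lam x - Erd r d x) \<le> pi^m * (24 * lam)"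
      unfolding unorm_def by (rule cSUP_least) (use b in auto)
    then show "unorm (\<lambda>x. Erdl S r d lam x - Erd r d x) \<le> 24 * pi^m * lam" by (simp add: algebra_simps)
  qed
qed

end
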